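(* Let $\Gamma\subset\mathrm{SL}_2(\mathbb{R})$ be a Fuchsian group and $k$ an integer. The map $$\phi_k:\mathfrak{o}_0\to\mathfrak{o}_k,\qquad p\,\partial_\tau+q\longmapsto p\,\partial_\tau+\tfrac{k}{2}p'+q,$$ is an isomorphism of Lie algebras compatible with the $\Gamma$-actions, i.e. $\phi_k(x\|_0\gamma)=\phi_k(x)\|_k\gamma$ for all $x\in\mathfrak{o}_0$, $\gamma\in\Gamma$; its $\rho$-linear extension gives a $\Gamma$-compatible Lie algebra isomorphism $\phi_k:\mathfrak{o}_0^\rho\cong\mathfrak{o}_k^\rho$. Furthermore $\phi_k$ restricts to an isomorphism $\mathfrak{d}_0^\rho\cong\mathfrak{d}_k^\rho$.
   Context: $\mathbb{H}$ is the upper half-plane, $\mathcal{O}$ its holomorphic functions, $j_\gamma(\tau)=c\tau+d$ for $\gamma=\begin{psmatrix}a&b\\c&d\end{psmatrix}$. $\Gamma$ acts on linear differential operators by $(a\|_k\gamma)(\tau,\partial_\tau)=j_\gamma(\tau)^{-k}a(\gamma\tau,\partial_{\gamma\tau})j_\gamma(\tau)^k$ with $\partial_{\gamma\tau}=j_\gamma(\tau)^2\partial_\tau$, extended coefficientwise to power series in commuting formal variables $\rho_1,\dots,\rho_n$. $\mathfrak{o}_k=\mathcal{O}\partial_\tau\oplus\mathcal{O}$ (operators $f\partial_\tau+g$) with Lie bracket the commutator: $[f\partial_\tau+g,r\partial_\tau+s]=(fr'-rf')\partial_\tau+fs'-rg'$. $\mathfrak{d}_k=\{2p\partial_\tau+kp'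 : p\in\mathbb{C}[\tau],\deg p\le 2\}\subset\mathfrak{o}_k$. With $(\rho)$ the ideal generated by $\rho_1,\dots,\rho_n$, set $\mathfrak{o}_k^\rho=(\rho)\,\mathfrak{o}_k[[\rho_1,\dots,\rho_n]]$ and $\mathfrak{d}_k^\rho=(\rho)\,\mathfrak{d}_k[[\rho_1,\dots,\rho_n]]$, with the $\rho$-bilinearly extended bracket. *)

theory Defs
  imports "HOL-Complex_Analysis.Complex_Analysis" "HOL-Computational_Algebra.Polynomial"
begin

definition UHP :: "complex set" where
  "UHP = {z. Im z > 0}"

text \<open>Holomorphic functions on the upper half-plane, represented canonically
  (value 0 outside the half-plane, so that equality of functions is equality on UHP).\<close>
definition Ohol :: "(complex \<Rightarrow> complex) set" where
  "Ohol = {f. f holomorphic_on UHP \<and> (\<forall>z. z \<notin> UHP \<longrightarrow> f z = 0)}"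

definition dH :: "(complex \<Rightarrow> complex) \<Rightarrow> complex \<Rightarrow> complex" where
  "dH f = (\<lambda>z. if z \<in> UHP then deriv f z else 0)"

text \<open>An operator  f \<partial>_tau + g  is represented by the pair (f, g).\<close>
type_synonym op = "(complex \<Rightarrow> complex) \<times> (complex \<Rightarrow> complex)"

definition oalg :: "int \<Rightarrow> op set" where
  "oalg k = Ohol \<times> Ohol"

definition opzero :: op where
  "opzero = (\<lambda>_. 0, \<lambda>_. 0)"

definition opadd :: "op \<Rightarrow> op \<Rightarrow> op" where
  "opadd A B = (\<lambda>z. fst A z + fst B z, \<lambda>z. snd A z + snd B z)"

definition opsmul :: "complex \<Rightarrow> op \<Rightarrow> op" where
  "opsmul c A = (\<lambda>z. c * fst A z, \<lambda>z. c * snd A z)"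

text \<open>Commutator: [f\<partial>+g, r\<partial>+s] = (f r' - r f')\<partial> + f s' - r g'.\<close>
definition obr :: "op \<Rightarrow> op \<Rightarrow> op" where
  "obr A B = (\<lambda>z. fst A z * dH (fst B) z - fst B z * dH (fst A) z,
              \<lambda>z. fst A z * dH (snd B) z - fst B z * dH (snd A) z)"

definition dalg :: "int \<Rightarrow> op set" where
  "dalg k = {((\<lambda>z. if z \<in> UHP then 2 * poly p z else 0),
              (\<lambda>z. if z \<in> UHP then of_int k * poly (pderiv p) z else 0)) | p :: complex poly.
             degree p \<le> 2}"

definition phi :: "int \<Rightarrow> op \<Rightarrow> op" where
  "phi k A = (fst A, \<lambda>z. of_int k / 2 * dH (fst A) z + snd A z)"

text \<open>A real 2x2 matrix (a, b, c, d) = [[a, b], [c, d]].\<close>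
type_synonym mat2 = "real \<times> real \<times> real \<times> real"

definition SL2R :: "mat2 set" where
  "SL2R = {(a, b, c, d). a * d - b * c = 1}"

definition m2mul :: "mat2 \<Rightarrow> mat2 \<Rightarrow> mat2" where
  "m2mul M N = (case M of (a, b, c, d) \<Rightarrow> case N of (a', b', c', d') \<Rightarrow>
      (a * a' + b * c', a * b' + b * d', c * a' + d * c', c * b' + d * d'))"

definition m2one :: mat2 where
  "m2one = (1, 0, 0, 1)"

definition m2inv :: "mat2 \<Rightarrow> mat2" where
  "m2inv M = (case M of (a, b, c, d) \<Rightarrow> (d, - b, - c, a))"

definition fuchsian :: "mat2 set \<Rightarrow> bool" where
  "fuchsian G \<longleftrightarrow> G \<subseteq> SL2R \<and> m2one \<in> G \<and>
     (\<forall>M\<in>G. \<forall>N\<in>G. m2mul M N \<in> G) \<and> (\<forall>M\<in>G. m2inv M \<in> G) \<and>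
     (\<forall>M\<in>G. \<exists>e>0. \<forall>N\<in>G. dist N M < e \<longrightarrow> N = M)"

definition mob :: "mat2 \<Rightarrow> complex \<Rightarrow> complex" where
  "mob M z = (case M of (a, b, c, d) \<Rightarrow>
      (of_real a * z + of_real b) / (of_real c * z + of_real d))"

definition jfac :: "mat2 \<Rightarrow> complex \<Rightarrow> complex" where
  "jfac M z = (case M of (a, b, c, d) \<Rightarrow> of_real c * z + of_real d)"

text \<open>Slash action (a||_k gamma)(tau, \<partial>_tau) = j^{-k} a(gamma tau, j^2 \<partial>_tau) j^k, written out:
  for a = f\<partial> + g one gets  f(gamma tau) j^2 \<partial> + g(gamma tau) + k c j f(gamma tau).\<close>
definition slash :: "int \<Rightarrow> mat2 \<Rightarrow> op \<Rightarrow> op" where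
  "slash k M A = (case M of (a, b, c, d) \<Rightarrow>
     ((\<lambda>z. if z \<in> UHP then fst A (mob M z) * (jfac M z)^2 else 0),
      (\<lambda>z. if z \<in> UHP then snd A (mob M z)
                 + of_int k * of_real c * jfac M z * fst A (mob M z) else 0)))"

definition mi :: "nat \<Rightarrow> (nat \<Rightarrow> nat) set" where
  "mi n = {\<alpha>. \<forall>i\<ge>n. \<alpha> i = 0}"

type_synonym 'a ser = "(nat \<Rightarrow> nat) \<Rightarrow> 'a"

definition serI :: "nat \<Rightarrow> op set \<Rightarrow> op ser set" where
  "serI n S = {A. (\<forall>\<alpha>\<in>mi n. A \<alpha> \<in> S) \<and> (\<forall>\<alpha>. \<alpha> \<notin> mi n \<longrightarrow> A \<alpha> = opzero)
                \<and> A (\<lambda>_. 0) = opzero}"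

definition scal :: "nat \<Rightarrow> complex ser set" where
  "scal n = {S. \<forall>\<alpha>. \<alpha> \<notin> mi n \<longrightarrow> S \<alpha> = 0}"

definition sadd :: "op ser \<Rightarrow> op ser \<Rightarrow> op ser" where
  "sadd A B = (\<lambda>\<alpha>. opadd (A \<alpha>) (B \<alpha>))"

definition ssmul :: "complex ser \<Rightarrow> op ser \<Rightarrow> op ser" where
  "ssmul S A = (\<lambda>\<alpha>.
     (\<lambda>z. \<Sum>\<beta>\<in>{\<beta>. \<beta> \<le> \<alpha>}. S \<beta> * fst (A (\<lambda>i. \<alpha> i - \<beta> i)) z,
      \<lambda>z. \<Sum>\<beta>\<in>{\<beta>. \<beta> \<le> \<alpha>}. S \<beta> * snd (A (\<lambda>i. \<alpha> i - \<beta> i)) z))"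

definition sbr :: "op ser \<Rightarrow> op ser \<Rightarrow> op ser" where
  "sbr A B = (\<lambda>\<alpha>.
     (\<lambda>z. \<Sum>\<beta>\<in>{\<beta>. \<beta> \<le> \<alpha>}. fst (obr (A \<beta>) (B (\<lambda>i. \<alpha> i - \<beta> i))) z,
      \<lambda>z. \<Sum>\<beta>\<in>{\<beta>. \<beta> \<le> \<alpha>}. snd (obr (A \<beta>) (B (\<lambda>i. \<alpha> i - \<beta> i))) z))"

definition sphi :: "int \<Rightarrow> op ser \<Rightarrow> op ser" where
  "sphi k A = (\<lambda>\<alpha>. phi k (A \<alpha>))"

definition sslash :: "int \<Rightarrow> mat2 \<Rightarrow> op ser \<Rightarrow> op ser" where
  "sslash k M A = (\<lambda>\<alpha>. slash k M (A \<alpha>))"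

end

theory Submission
  imports Defs
begin


lemma open_UHP: "open UHP"
  unfolding UHP_def using open_halfspace_Im_gt[of 0] by simp

lemma hol_has_deriv:
  assumes "f holomorphic_on UHP" "z \<in> UHP"
  shows "(f has_field_derivative deriv f z) (at z)"
  using assms open_UHP holomorphic_derivI by blast

lemma dH_eqI:
  assumes "z \<in> UHP" "(f has_field_derivative D) (at z)"
  shows "dH f z = D"
  using assms by (simp add: dH_def DERIV_imp_deriv)

lemma dH_out: "z \<notin> UHP \<Longrightarrow> dH f z = 0"
  by (simp add: dH_def)

lemma dH_cong:
  assumes "\<forall>z\<in>UHP. f z = g z"
  shows "dH f = dH g"
proof
  fix z show "dH f z = dH g z"
  proof (cases "z \<in> UHP")
    case True
    have "eventually (\<lambda>x. x \<in> UHP) (nhds z)"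
      using True open_UHP eventually_nhds_in_open by blast
    then have "eventually (\<lambda>x. f x = g x) (nhds z)"
      by (rule eventually_mono) (use assms in auto)
    then have "deriv f z = deriv g z" by (rule deriv_cong_ev) simp
    then show ?thesis using True by (simp add: dH_def)
  qed (simp add: dH_def)
qed

lemma dH_hol: "f holomorphic_on UHP \<Longrightarrow> dH f holomorphic_on UHP"
proof -
  assume f: "f holomorphic_on UHP"
  have "deriv f holomorphic_on UHP" using f open_UHP by (rule holomorphic_deriv)
  then show ?thesis by (rule holomorphic_transform) (simp add: dH_def)
qed

lemma dH_Ohol: "f \<in> Ohol \<Longrightarrow> dH f \<in> Ohol"
  unfolding Ohol_def using dH_hol by (auto simp: dH_def)

lemma dH_zero: "dH (\<lambda>z. 0) = (\<lambda>z. 0)"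
  by (auto simp: dH_def intro!: DERIV_imp_deriv)

lemma dH_lin:
  assumes "f holomorphic_on UHP" "g holomorphic_on UHP"
  shows "dH (\<lambda>z. a * f z + b * g z) = (\<lambda>z. a * dH f z + b * dH g z)"
proof
  fix z show "dH (\<lambda>z. a * f z + b * g z) z = a * dH f z + b * dH g z"
  proof (cases "z \<in> UHP")
    case True
    have "((\<lambda>z. a * f z + b * g z) has_field_derivative a * deriv f z + b * deriv g z) (at z)"
      using hol_has_deriv[OF assms(1) True] hol_has_deriv[OF assms(2) True]
      by (auto intro!: derivative_eq_intros)
    then show ?thesis using True by (simp add: DERIV_imp_deriv dH_def)
  qed (simp add: dH_def)
qed

lemma dH_mult:
  assumes "f holomorphic_on UHP" "g holomorphic_on UHP"
  shows "dH (\<lambda>z. f z * g z) = (\<lambda>z. dH f z * g z + f z * dH g z)"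
proof
  fix z show "dH (\<lambda>z. f z * g z) z = dH f z * g z + f z * dH g z"
  proof (cases "z \<in> UHP")
    case True
    have "((\<lambda>z. f z * g z) has_field_derivative deriv f z * g z + f z * deriv g z) (at z)"
      using hol_has_deriv[OF assms(1) True] hol_has_deriv[OF assms(2) True]
      by (auto intro!: derivative_eq_intros)
    then show ?thesis using True by (simp add: DERIV_imp_deriv dH_def)
  qed (simp add: dH_def)
qed

lemma dH_sum:
  assumes "\<And>i. f i holomorphic_on UHP"
  shows "dH (\<lambda>z. \<Sum>i\<in>F. f i z) = (\<lambda>z. \<Sum>i\<in>F. dH (f i) z)"
proof (cases "finite F")
  case fin: True
  show ?thesis
  proof
    fix z show "dH (\<lambda>z. \<Sum>i\<in>F. f i z) z = (\<Sum>i\<in>F. dH (f i) z)"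
    proof (cases "z \<in> UHP")
      case True
      have "((\<lambda>z. \<Sum>i\<in>F. f i z) has_field_derivative (\<Sum>i\<in>F. deriv (f i) z)) (at z)"
        by (rule DERIV_sum) (use hol_has_deriv[OF assms True] in auto)
      then show ?thesis using True by (simp add: DERIV_imp_deriv dH_def)
    qed (simp add: dH_def)
  qed
next
  case False
  then show ?thesis by (simp add: dH_zero)
qed



lemma Ohol_phi: "A \<in> Ohol \<times> Ohol \<Longrightarrow> phi k A \<in> Ohol \<times> Ohol"
  using dH_hol by (cases A) (auto simp: phi_def Ohol_def dH_def intro!: holomorphic_intros)

lemma phi_bij: "bij_betw (phi k) (oalg 0) (oalg k)"
proof (rule bij_betwI')
  fix A B assume "A \<in> oalg 0" "B \<in> oalg 0"
  show "(phi k A = phi k B) = (A = B)"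
  proof
    assume h: "phi k A = phi k B"
    then have f: "fst A = fst B" by (simp add: phi_def)
    have "snd A = snd B"
    proof
      fix z
      have "snd A z = snd (phi k A) z - of_int k / 2 * dH (fst A) z" by (simp add: phi_def)
      also have "\<dots> = snd (phi k B) z - of_int k / 2 * dH (fst B) z" using h f by simp
      also have "\<dots> = snd B z" by (simp add: phi_def)
      finally show "snd A z = snd B z" .
    qed
    with f show "A = B" by (simp add: prod_eq_iff)
  qed simp
next
  fix A assume "A \<in> oalg 0" then show "phi k A \<in> oalg k" by (simp add: oalg_def Ohol_phi)
next
  fix B assume B: "B \<in> oalg k"
  obtain f g where fg: "B = (f, g)" by (cases B)
  let ?A = "(f, \<lambda>z. g z - of_int k / 2 * dH f z)"
  have "?A \<in> oalg 0" using B dH_hol unfolding fg oalg_def Ohol_def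
    by (auto simp: dH_def intro!: holomorphic_intros)
  moreover have "B = phi k ?A" by (simp add: phi_def fg)
  ultimately show "\<exists>A\<in>oalg 0. B = phi k A" by blast
qed

lemma phi_add: "A \<in> oalg 0 \<Longrightarrow> B \<in> oalg 0 \<Longrightarrow> phi k (opadd A B) = opadd (phi k A) (phi k B)"
  using dH_lin[of "fst A" "fst B" 1 1]
  by (auto simp: oalg_def Ohol_def phi_def opadd_def fun_eq_iff distrib_left)

lemma phi_smul: "A \<in> oalg 0 \<Longrightarrow> phi k (opsmul c A) = opsmul c (phi k A)"
  using dH_lin[of "fst A" "fst A" c 0]
  by (auto simp: oalg_def Ohol_def phi_def opsmul_def fun_eq_iff algebra_simps)

lemma obr_fst_hol: "A \<in> oalg k \<Longrightarrow> B \<in> oalg l \<Longrightarrow> fst (obr A B) holomorphic_on UHP"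
  using dH_hol by (auto simp: oalg_def Ohol_def obr_def intro!: holomorphic_intros)

lemma obr_snd_hol: "A \<in> oalg k \<Longrightarrow> B \<in> oalg l \<Longrightarrow> snd (obr A B) holomorphic_on UHP"
  using dH_hol by (auto simp: oalg_def Ohol_def obr_def intro!: holomorphic_intros)

lemma phi_obr_pt:
  assumes "A \<in> oalg 0" "B \<in> oalg 0"
  shows "fst (obr (phi k A) (phi k B)) = fst (obr A B)"
    "snd (obr (phi k A) (phi k B)) = (\<lambda>z. of_int k / 2 * dH (fst (obr A B)) z + snd (obr A B) z)"
proof -
  show "fst (obr (phi k A) (phi k B)) = fst (obr A B)" by (simp add: obr_def phi_def)
  obtain f g where A: "A = (f, g)" by (cases A)
  obtain r s where B: "B = (r, s)" by (cases B)
  have hol: "f holomorphic_on UHP" "g holomorphic_on UHP" "r holomorphic_on UHP" "s holomorphic_on UHP"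
    using assms by (auto simp: A B oalg_def Ohol_def)
  have d1: "dH (\<lambda>z. of_int k / 2 * dH r z + s z) = (\<lambda>z. of_int k / 2 * dH (dH r) z + dH s z)"
    using dH_lin[OF dH_hol[OF hol(3)] hol(4), of "of_int k / 2" 1] by simp
  have d2: "dH (\<lambda>z. of_int k / 2 * dH f z + g z) = (\<lambda>z. of_int k / 2 * dH (dH f) z + dH g z)"
    using dH_lin[OF dH_hol[OF hol(1)] hol(2), of "of_int k / 2" 1] by simp
  have m1: "dH (\<lambda>z. f z * dH r z) = (\<lambda>z. dH f z * dH r z + f z * dH (dH r) z)"
    by (rule dH_mult[OF hol(1) dH_hol[OF hol(3)]])
  have m2: "dH (\<lambda>z. r z * dH f z) = (\<lambda>z. dH r z * dH f z + r z * dH (dH f) z)"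
    by (rule dH_mult[OF hol(3) dH_hol[OF hol(1)]])
  have "dH (\<lambda>z. f z * dH r z - r z * dH f z) = dH (\<lambda>z. 1 * (f z * dH r z) + (-1) * (r z * dH f z))"
    by simp
  also have "\<dots> = (\<lambda>z. dH (\<lambda>z. f z * dH r z) z - dH (\<lambda>z. r z * dH f z) z)"
    by (subst dH_lin) (auto intro!: holomorphic_intros hol dH_hol)
  finally have d3: "dH (\<lambda>z. f z * dH r z - r z * dH f z) = (\<lambda>z. f z * dH (dH r) z - r z * dH (dH f) z)"
    by (simp add: m1 m2 fun_eq_iff algebra_simps)
  show "snd (obr (phi k A) (phi k B)) = (\<lambda>z. of_int k / 2 * dH (fst (obr A B)) z + snd (obr A B) z)"
    unfolding obr_def phi_def A B fst_conv snd_conv d1 d2 d3 by (simp add: fun_eq_iff algebra_simps)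
qed

lemma phi_obr: "A \<in> oalg 0 \<Longrightarrow> B \<in> oalg 0 \<Longrightarrow> phi k (obr A B) = obr (phi k A) (phi k B)"
  using phi_obr_pt[of A B k] by (simp add: phi_def prod_eq_iff)



lemma jfac_nz:
  assumes "M \<in> SL2R" "z \<in> UHP" shows "jfac M z \<noteq> 0"
proof
  obtain a b c d where M: "M = (a, b, c, d)" by (cases M) auto
  assume "jfac M z = 0"
  then have "of_real c * z + of_real d = 0" by (simp add: jfac_def M)
  then have "Im (of_real c * z + of_real d) = 0" "Re (of_real c * z + of_real d) = 0" by simp_all
  then have "c * Im z = 0" "c * Re z + d = 0" by simp_all
  moreover have "Im z > 0" using assms(2) by (simp add: UHP_def)
  ultimately have "c = 0" "d = 0" by auto
  then show False using assms(1) by (simp add: SL2R_def M)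
qed

lemma mob_UHP:
  assumes "M \<in> SL2R" "z \<in> UHP" shows "mob M z \<in> UHP"
proof -
  obtain a b c d where M: "M = (a, b, c, d)" by (cases M) auto
  have det: "a * d - b * c = 1" using assms(1) by (simp add: SL2R_def M)
  have nz: "of_real c * z + of_real d \<noteq> 0" using jfac_nz[OF assms] by (simp add: jfac_def M)
  have pos: "(Re (of_real c * z + of_real d))\<^sup>2 + (Im (of_real c * z + of_real d))\<^sup>2 > 0"
    using nz by (metis complex_eq_iff sum_power2_gt_zero_iff zero_complex.sel)
  have num: "Im (of_real a * z + of_real b) * Re (of_real c * z + of_real d)
      - Re (of_real a * z + of_real b) * Im (of_real c * z + of_real d) = (a * d - b * c) * Im z"
    by (simp add: algebra_simps)
  have "Im (mob M z) = (a * d - b * c) * Im z / ((Re (of_real c * z + of_real d))\<^sup>2 + (Im (of_real c * z + of_real d))\<^sup>2)"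
    unfolding mob_def M by (simp only: prod.case Im_divide num)
  moreover have "Im z > 0" using assms(2) by (simp add: UHP_def)
  ultimately show ?thesis using pos det by (simp add: UHP_def)
qed

lemma mob_deriv:
  assumes "M \<in> SL2R" "z \<in> UHP"
  shows "(mob M has_field_derivative 1 / (jfac M z)\<^sup>2) (at z)"
proof -
  obtain a b c d where M: "M = (a, b, c, d)" by (cases M) auto
  have det: "a * d - b * c = 1" using assms(1) by (simp add: SL2R_def M)
  have nz: "of_real c * z + of_real d \<noteq> 0" using jfac_nz[OF assms] by (simp add: jfac_def M)
  have e: "mob (a, b, c, d) = (\<lambda>z. (of_real a * z + of_real b) / (of_real c * z + of_real d))"
    by (simp add: mob_def M fun_eq_iff)
  have "((\<lambda>z. (of_real a * z + of_real b) / (of_real c * z + of_real d)) has_field_derivative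
     ((of_real a * (of_real c * z + of_real d) - (of_real a * z + of_real b) * of_real c) / (of_real c * z + of_real d)\<^sup>2)) (at z)"
    using nz by (auto intro!: derivative_eq_intros simp: power2_eq_square)
  moreover have "(of_real a * (of_real c * z + of_real d) - (of_real a * z + of_real b) * of_real c) = (of_real (a * d - b * c) :: complex)"
    by (simp add: algebra_simps)
  ultimately show ?thesis using det by (simp add: e jfac_def M)
qed

lemma jfac_deriv: "(jfac M has_field_derivative of_real (fst (snd (snd M)))) (at z)"
proof -
  obtain a b c d where M: "M = (a, b, c, d)" by (cases M) auto
  have e: "jfac (a, b, c, d) = (\<lambda>z. of_real c * z + of_real d)" by (simp add: jfac_def fun_eq_iff)
  show ?thesis unfolding M e by (auto intro!: derivative_eq_intros)
qed

lemma phi_slash: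
  assumes "M \<in> SL2R" "A \<in> oalg 0"
  shows "phi k (slash 0 M A) = slash k M (phi k A)"
proof -
  obtain a b c d where M: "M = (a, b, c, d)" by (cases M) auto
  obtain f g where A: "A = (f, g)" by (cases A)
  have hf: "f holomorphic_on UHP" using assms(2) by (simp add: A oalg_def Ohol_def)
  have dF: "dH (\<lambda>z. if z \<in> UHP then f (mob M z) * (jfac M z)\<^sup>2 else 0) z
      = (if z \<in> UHP then dH f (mob M z) + 2 * of_real c * jfac M z * f (mob M z) else 0)" for z
  proof (cases "z \<in> UHP")
    case True
    have "dH (\<lambda>z. if z \<in> UHP then f (mob M z) * (jfac M z)\<^sup>2 else 0) = dH (\<lambda>z. f (mob M z) * (jfac M z)\<^sup>2)"
      by (rule dH_cong) simp
    moreover have mz: "mob M z \<in> UHP" by (rule mob_UHP[OF assms(1) True])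
    have jnz: "jfac M z \<noteq> 0" by (rule jfac_nz[OF assms(1) True])
    have "((\<lambda>z. f (mob M z) * (jfac M z)\<^sup>2) has_field_derivative
        (deriv f (mob M z) * (1 / (jfac M z)\<^sup>2)) * (jfac M z)\<^sup>2 + f (mob M z) * (2 * jfac M z * of_real c)) (at z)"
      using DERIV_chain2[OF hol_has_deriv[OF hf mz] mob_deriv[OF assms(1) True]] jfac_deriv[of M z]
      by (auto intro!: derivative_eq_intros simp: M)
    then have "dH (\<lambda>z. f (mob M z) * (jfac M z)\<^sup>2) z = deriv f (mob M z) + 2 * of_real c * jfac M z * f (mob M z)"
      using True jnz by (simp add: dH_eqI field_simps)
    ultimately show ?thesis using True mz by (simp add: dH_def)
  qed (simp add: dH_def)
  show ?thesis
    unfolding A M slash_def phi_def prod.case fst_conv snd_conv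
    apply (simp only: M[symmetric])
    apply (simp add: dF fun_eq_iff algebra_simps)
    done
qed



lemma dH_cmult: "f holomorphic_on UHP \<Longrightarrow> dH (\<lambda>z. c * f z) = (\<lambda>z. c * dH f z)"
  using dH_lin[of f f c 0] by simp

lemma opzero_oalg: "opzero \<in> oalg k"
  by (simp add: opzero_def oalg_def Ohol_def)

lemma phi_opzero: "phi k opzero = opzero"
  by (simp add: phi_def opzero_def dH_zero)

lemma serI_coef: "A \<in> serI n (oalg k) \<Longrightarrow> A \<alpha> \<in> oalg l"
  unfolding serI_def using opzero_oalg by (cases "\<alpha> \<in> mi n") (auto simp: oalg_def)

lemma sphi_bij_gen:
  assumes "bij_betw (phi k) S T" "opzero \<in> S" "opzero \<in> T"
  shows "bij_betw (sphi k) (serI n S) (serI n T)"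
proof (rule bij_betwI')
  fix A B assume A: "A \<in> serI n S" and B: "B \<in> serI n S"
  show "(sphi k A = sphi k B) = (A = B)"
  proof
    assume h: "sphi k A = sphi k B"
    show "A = B"
    proof
      fix \<alpha>
      show "A \<alpha> = B \<alpha>"
      proof (cases "\<alpha> \<in> mi n")
        case True
        then have "A \<alpha> \<in> S" "B \<alpha> \<in> S" using A B by (auto simp: serI_def)
        moreover have "phi k (A \<alpha>) = phi k (B \<alpha>)" using h by (metis sphi_def)
        ultimately show ?thesis using assms(1) by (metis bij_betw_inv_into_left)
      next
        case False then show ?thesis using A B by (auto simp: serI_def)
      qed
    qed
  qed simp
next
  fix A assume A: "A \<in> serI n S"
  show "sphi k A \<in> serI n T"
    using A assms(1) by (auto simp: serI_def sphi_def phi_opzero bij_betw_def)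
next
  fix B assume B: "B \<in> serI n T"
  define A where "A = (\<lambda>\<alpha>. if \<alpha> \<in> mi n then inv_into S (phi k) (B \<alpha>) else opzero)"
  have inv0: "inv_into S (phi k) opzero = opzero"
    using assms by (metis bij_betw_inv_into_left phi_opzero)
  have "A \<in> serI n S"
    using B assms(1) inv0 unfolding A_def serI_def
    by (auto simp: mi_def intro: bij_betw_apply[OF bij_betw_inv_into])
  moreover have "B = sphi k A"
  proof
    fix \<alpha> show "B \<alpha> = sphi k A \<alpha>"
      using B assms(1) unfolding A_def sphi_def serI_def
      by (auto simp: phi_opzero bij_betw_inv_into_right)
  qed
  ultimately show "\<exists>A\<in>serI n S. B = sphi k A" by blast
qed

lemma sphi_add: "A \<in> serI n (oalg 0) \<Longrightarrow> B \<in> serI n (oalg 0) \<Longrightarrow> sphi k (sadd A B) = sadd (sphi k A) (sphi k B)"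
  by (auto simp: sphi_def sadd_def phi_add serI_coef)

lemma sphi_slash: "M \<in> SL2R \<Longrightarrow> A \<in> serI n (oalg 0) \<Longrightarrow> sphi k (sslash 0 M A) = sslash k M (sphi k A)"
  by (auto simp: sphi_def sslash_def phi_slash serI_coef)

lemma sphi_smul:
  assumes "A \<in> serI n (oalg 0)"
  shows "sphi k (ssmul S A) = ssmul S (sphi k A)"
proof
  fix \<alpha> :: "nat \<Rightarrow> nat"
  let ?F = "{\<beta>. \<beta> \<le> \<alpha>}"
  have hol2: "fst (A \<gamma>) holomorphic_on UHP" for \<gamma>
    using serI_coef[OF assms, of \<gamma> 0] by (auto simp: oalg_def Ohol_def mem_Times_iff)
  have hol: "\<And>\<beta>. (\<lambda>z. S \<beta> * fst (A (\<lambda>i. \<alpha> i - \<beta> i)) z) holomorphic_on UHP"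
    by (intro holomorphic_intros hol2)
  have "dH (\<lambda>z. \<Sum>\<beta>\<in>?F. S \<beta> * fst (A (\<lambda>i. \<alpha> i - \<beta> i)) z) = (\<lambda>z. \<Sum>\<beta>\<in>?F. S \<beta> * dH (fst (A (\<lambda>i. \<alpha> i - \<beta> i))) z)"
    by (simp add: dH_sum[OF hol] dH_cmult[OF hol2])
  then show "sphi k (ssmul S A) \<alpha> = ssmul S (sphi k A) \<alpha>"
    by (simp add: sphi_def ssmul_def phi_def sum.distrib sum_distrib_left sum_divide_distrib algebra_simps)
qed

lemma sphi_br:
  assumes "A \<in> serI n (oalg 0)" "B \<in> serI n (oalg 0)"
  shows "sphi k (sbr A B) = sbr (sphi k A) (sphi k B)"
proof
  fix \<alpha> :: "nat \<Rightarrow> nat"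
  let ?F = "{\<beta>. \<beta> \<le> \<alpha>}"
  have c: "\<And>\<beta>. A \<beta> \<in> oalg 0" "\<And>\<beta>. B \<beta> \<in> oalg 0" using serI_coef assms by blast+
  have hol: "\<And>\<beta>. fst (obr (A \<beta>) (B (\<lambda>i. \<alpha> i - \<beta> i))) holomorphic_on UHP"
    using obr_fst_hol c by blast
  have D: "dH (\<lambda>z. \<Sum>\<beta>\<in>?F. fst (obr (A \<beta>) (B (\<lambda>i. \<alpha> i - \<beta> i))) z) = (\<lambda>z. \<Sum>\<beta>\<in>?F. dH (fst (obr (A \<beta>) (B (\<lambda>i. \<alpha> i - \<beta> i)))) z)"
    by (rule dH_sum[OF hol])
  have e1: "fst (obr (phi k (A \<beta>)) (phi k (B \<gamma>))) z = fst (obr (A \<beta>) (B \<gamma>)) z" for \<beta> \<gamma> z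
    by (simp add: phi_obr_pt(1)[OF c(1) c(2)])
  have e2: "snd (obr (phi k (A \<beta>)) (phi k (B \<gamma>))) z = of_int k / 2 * dH (fst (obr (A \<beta>) (B \<gamma>))) z + snd (obr (A \<beta>) (B \<gamma>)) z" for \<beta> \<gamma> z
    by (simp add: phi_obr_pt(2)[OF c(1) c(2)])
  show "sphi k (sbr A B) \<alpha> = sbr (sphi k A) (sphi k B) \<alpha>"
    unfolding sbr_def sphi_def e1 e2
    by (simp add: phi_def D sum.distrib sum_distrib_left)
qed



lemma dH_poly: "dH (\<lambda>z. if z \<in> UHP then 2 * poly p z else 0) = (\<lambda>z. if z \<in> UHP then 2 * poly (pderiv p) z else 0)"
proof -
  have "dH (\<lambda>z. if z \<in> UHP then 2 * poly p z else 0) = dH (\<lambda>z. 2 * poly p z)"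
    by (rule dH_cong) simp
  moreover have "dH (\<lambda>z. 2 * poly p z) z = (if z \<in> UHP then 2 * poly (pderiv p) z else 0)" for z
    by (cases "z \<in> UHP") (auto simp: dH_def intro!: DERIV_imp_deriv derivative_eq_intros poly_DERIV)
  ultimately show ?thesis by auto
qed

lemma phi_dalg:
  "phi k ((\<lambda>z. if z \<in> UHP then 2 * poly p z else 0), (\<lambda>z. if z \<in> UHP then of_int 0 * poly (pderiv p) z else 0))
   = ((\<lambda>z. if z \<in> UHP then 2 * poly p z else 0), (\<lambda>z. if z \<in> UHP then of_int k * poly (pderiv p) z else 0))"
  by (simp add: phi_def dH_poly fun_eq_iff)

lemma dalg_oalg: "dalg k \<subseteq> oalg l"
proof
  fix A assume "A \<in> dalg k"
  then obtain p :: "complex poly" where p: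
    "A = ((\<lambda>z. if z \<in> UHP then 2 * poly p z else 0), (\<lambda>z. if z \<in> UHP then of_int k * poly (pderiv p) z else 0))"
    unfolding dalg_def by blast
  have h1: "(\<lambda>z. if z \<in> UHP then 2 * poly p z else 0) holomorphic_on UHP"
    by (rule holomorphic_transform[of "\<lambda>z. 2 * poly p z"]) (auto intro!: holomorphic_intros)
  have h2: "(\<lambda>z. if z \<in> UHP then of_int k * poly (pderiv p) z else 0) holomorphic_on UHP"
    by (rule holomorphic_transform[of "\<lambda>z. of_int k * poly (pderiv p) z"]) (auto intro!: holomorphic_intros)
  show "A \<in> oalg l" unfolding p oalg_def Ohol_def using h1 h2 by auto
qed

lemma phi_bij_dalg: "bij_betw (phi k) (dalg 0) (dalg k)"
proof -
  have "inj_on (phi k) (dalg 0)"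
    using phi_bij[of k] dalg_oalg[of 0 0] by (meson bij_betw_def inj_on_subset)
  moreover have "phi k ` dalg 0 = dalg k"
  proof
    show "phi k ` dalg 0 \<subseteq> dalg k"
      unfolding dalg_def by (auto simp only: phi_dalg)
  next
    show "dalg k \<subseteq> phi k ` dalg 0"
    proof
      fix B assume "B \<in> dalg k"
      then obtain p :: "complex poly" where p: "degree p \<le> 2"
        "B = ((\<lambda>z. if z \<in> UHP then 2 * poly p z else 0), (\<lambda>z. if z \<in> UHP then of_int k * poly (pderiv p) z else 0))"
        unfolding dalg_def by blast
      have "((\<lambda>z. if z \<in> UHP then 2 * poly p z else 0), (\<lambda>z. if z \<in> UHP then of_int 0 * poly (pderiv p) z else 0)) \<in> dalg 0"
        unfolding dalg_def using p(1) by blast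
      moreover have "B = phi k ((\<lambda>z. if z \<in> UHP then 2 * poly p z else 0), (\<lambda>z. if z \<in> UHP then of_int 0 * poly (pderiv p) z else 0))"
        by (simp only: p(2) phi_dalg)
      ultimately show "B \<in> phi k ` dalg 0" by (rule rev_image_eqI)
    qed
  qed
  ultimately show ?thesis by (simp add: bij_betw_def)
qed

lemma opzero_dalg: "opzero \<in> dalg k"
proof -
  have "opzero = ((\<lambda>z. if z \<in> UHP then 2 * poly (0::complex poly) z else 0), (\<lambda>z. if z \<in> UHP then of_int k * poly (pderiv 0) z else 0))"
    by (simp add: opzero_def fun_eq_iff)
  then show ?thesis unfolding dalg_def by force
qed

theorem proposition3p1:
  fixes \<Gamma> :: "mat2 set" and k :: int and n :: nat
  assumes "fuchsian \<Gamma>"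
  shows
    "bij_betw (phi k) (oalg 0) (oalg k)
     \<and> (\<forall>A\<in>oalg 0. \<forall>B\<in>oalg 0. phi k (opadd A B) = opadd (phi k A) (phi k B))
     \<and> (\<forall>c. \<forall>A\<in>oalg 0. phi k (opsmul c A) = opsmul c (phi k A))
     \<and> (\<forall>A\<in>oalg 0. \<forall>B\<in>oalg 0. phi k (obr A B) = obr (phi k A) (phi k B))
     \<and> (\<forall>\<gamma>\<in>\<Gamma>. \<forall>A\<in>oalg 0. phi k (slash 0 \<gamma> A) = slash k \<gamma> (phi k A))
     \<and> bij_betw (sphi k) (serI n (oalg 0)) (serI n (oalg k))
     \<and> (\<forall>A\<in>serI n (oalg 0). \<forall>B\<in>serI n (oalg 0). sphi k (sadd A B) = sadd (sphi k A) (sphi k B))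
     \<and> (\<forall>S\<in>scal n. \<forall>A\<in>serI n (oalg 0). sphi k (ssmul S A) = ssmul S (sphi k A))
     \<and> (\<forall>A\<in>serI n (oalg 0). \<forall>B\<in>serI n (oalg 0). sphi k (sbr A B) = sbr (sphi k A) (sphi k B))
     \<and> (\<forall>\<gamma>\<in>\<Gamma>. \<forall>A\<in>serI n (oalg 0). sphi k (sslash 0 \<gamma> A) = sslash k \<gamma> (sphi k A))
     \<and> bij_betw (sphi k) (serI n (dalg 0)) (serI n (dalg k))"
proof -
  have G: "\<Gamma> \<subseteq> SL2R" using assms by (simp add: fuchsian_def)
  show ?thesis
  proof (intro conjI ballI allI)
    show "bij_betw (phi k) (oalg 0) (oalg k)" by (rule phi_bij)
    show "bij_betw (sphi k) (serI n (oalg 0)) (serI n (oalg k))"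
      by (rule sphi_bij_gen[OF phi_bij opzero_oalg opzero_oalg])
    show "bij_betw (sphi k) (serI n (dalg 0)) (serI n (dalg k))"
      by (rule sphi_bij_gen[OF phi_bij_dalg opzero_dalg opzero_dalg])
  qed (use G in \<open>auto simp: phi_add phi_smul phi_obr phi_slash sphi_add sphi_smul sphi_br sphi_slash\<close>)
qed

end
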